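(* Consider the Data Revocation Game with negligible unlearning cost, and assume $d_i^{\max}=d^{\max}$ for all $i$ and $m_1<m_2<\dots<m_I$, where $m_i=(\xi_i\ell_i)^{-1}-\epsilon_i$. Then every Nash equilibrium $(d_i^* )$ satisfies $d_1^*\le d_2^*\le\dots\le d_I^*$.
   Context: Data Revocation Game with negligible unlearning cost: a finite set of users $\mathcal I=\{1,\dots,I\}$, $I\ge 2$, each with parameters $d_i^{\max}>0$, $\epsilon_i>0$, $\xi_i>0$, $\ell_i>0$. Each user chooses $d_i\in[0,d_i^{\max}]$, with payoff $U_i(d_i,\boldsymbol{d_{-i}})=\ln\big(\sum_{j\in\mathcal I}d_j+\epsilon_i\big)-\xi_i d_i\ell_i$. A Nash equilibrium is a profile $(d_i^* )$ with $d_i^*\in[0,d_i^{\max}]$ and $U_i(d_i^*,\boldsymbol{d_{-i}^*})\ge U_i(d_i,\boldsymbol{d_{-i}^*})$ for all $i$ and $d_i\in[0,d_i^{\max}]$. The quantity $m_i=(\xi_i\ell_i)^{-1}-\epsilon_i$ is called the remaining metric of user $i$. *)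

theory Defs
  imports Complex_Main
begin

text \<open>Data Revocation Game with negligible unlearning cost. Users are 1..I.
  A strategy profile is d :: nat => real (only values on {1..I} matter).\<close>

definition payoff ::
  "nat \<Rightarrow> (nat \<Rightarrow> real) \<Rightarrow> (nat \<Rightarrow> real) \<Rightarrow> (nat \<Rightarrow> real) \<Rightarrow> nat \<Rightarrow> (nat \<Rightarrow> real) \<Rightarrow> real"
  where "payoff I eps xi ell i d = ln ((\<Sum>j\<in>{1..I}. d j) + eps i) - xi i * d i * ell i"

definition nash_eq ::
  "nat \<Rightarrow> (nat \<Rightarrow> real) \<Rightarrow> (nat \<Rightarrow> real) \<Rightarrow> (nat \<Rightarrow> real) \<Rightarrow> (nat \<Rightarrow> real) \<Rightarrow> (nat \<Rightarrow> real) \<Rightarrow> bool"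
  where "nash_eq I dmax eps xi ell d \<longleftrightarrow>
    (\<forall>i\<in>{1..I}. d i \<in> {0..dmax i}) \<and>
    (\<forall>i\<in>{1..I}. \<forall>x\<in>{0..dmax i}. payoff I eps xi ell i d \<ge> payoff I eps xi ell i (d(i := x)))"

definition remaining_metric :: "(nat \<Rightarrow> real) \<Rightarrow> (nat \<Rightarrow> real) \<Rightarrow> (nat \<Rightarrow> real) \<Rightarrow> nat \<Rightarrow> real"
  where "remaining_metric eps xi ell i = inverse (xi i * ell i) - eps i"

end

theory Submission
  imports Defs
begin

lemma upd_sum:
  assumes "i \<in> {1..(I::nat)}"
  shows "(\<Sum>j\<in>{1..I}. (d(i:=x)) j) = (\<Sum>j\<in>{1..I}. d j) - d i + (x::real)"
proof -
  have "(\<Sum>j\<in>{1..I}. (d(i:=x)) j) = (d(i:=x)) i + (\<Sum>j\<in>{1..I}-{i}. (d(i:=x)) j)"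
    using assms by (simp add: sum.remove)
  also have "(\<Sum>j\<in>{1..I}-{i}. (d(i:=x)) j) = (\<Sum>j\<in>{1..I}-{i}. d j)"
    by (rule sum.cong) auto
  also have "(\<Sum>j\<in>{1..I}. d j) = d i + (\<Sum>j\<in>{1..I}-{i}. d j)"
    using assms by (simp add: sum.remove)
  ultimately show ?thesis by simp
qed

lemma foc_down:
  fixes a t c :: real
  assumes "a > 0" "t > 0" "c > 0" "ln (a + t) - ln a \<ge> c * t"
  shows "a \<le> 1 / c"
proof -
  have "ln ((a+t)/a) \<le> (a+t)/a - 1" using assms by (intro ln_le_minus_one) auto
  moreover have "ln ((a+t)/a) = ln (a+t) - ln a" using assms by (simp add: ln_div)
  moreover have "(a+t)/a - 1 = t / a" using assms by (simp add: field_simps)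
  ultimately have "c * t \<le> t / a" using assms by linarith
  hence "c \<le> 1 / a" using assms by (simp add: field_simps)
  thus ?thesis using assms by (simp add: field_simps)
qed

lemma foc_up:
  fixes a t c :: real
  assumes "a > 0" "t > 0" "c > 0" "ln (a + t) - ln a \<le> c * t"
  shows "a + t \<ge> 1 / c"
proof -
  have "ln (a/(a+t)) \<le> a/(a+t) - 1" using assms by (intro ln_le_minus_one) auto
  moreover have "ln (a/(a+t)) = ln a - ln (a+t)" using assms by (simp add: ln_div)
  moreover have "a/(a+t) - 1 = - t / (a+t)" using assms by (simp add: field_simps)
  ultimately have "t / (a+t) \<le> c * t" using assms by linarith
  hence "t \<le> (c * t) * (a+t)" using assms by (simp add: divide_le_eq)
  hence "t * 1 \<le> t * (c * (a+t))" by (simp add: algebra_simps)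
  hence "1 \<le> c * (a+t)" using assms(2) by (simp only: mult_le_cancel_left_pos)
  thus ?thesis using assms by (simp add: divide_le_eq mult.commute)
qed

theorem proposition4:
  fixes I :: nat and dmax :: "nat \<Rightarrow> real" and D :: real
    and eps xi ell d :: "nat \<Rightarrow> real"
  assumes "I \<ge> 2"
    and "\<And>i. i \<in> {1..I} \<Longrightarrow> dmax i > 0 \<and> eps i > 0 \<and> xi i > 0 \<and> ell i > 0"
    and "\<And>i. i \<in> {1..I} \<Longrightarrow> dmax i = D"
    and "\<And>i. i \<in> {1..<I} \<Longrightarrow> remaining_metric eps xi ell i < remaining_metric eps xi ell (i + 1)"
    and "nash_eq I dmax eps xi ell d"
  shows "\<forall>i\<in>{1..<I}. d i \<le> d (i + 1)"
proof (rule ballI, rule ccontr)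
  fix i assume iI: "i \<in> {1..<I}" and neg: "\<not> d i \<le> d (i + 1)"
  define j where "j = i + 1"
  have i1: "i \<in> {1..I}" and j1: "j \<in> {1..I}" using iI by (auto simp: j_def)
  define S where "S = (\<Sum>k\<in>{1..I}. d k)"
  have dnn: "\<And>k. k \<in> {1..I} \<Longrightarrow> d k \<in> {0..D}" using assms(3,5) unfolding nash_eq_def by metis
  have S0: "S \<ge> 0" unfolding S_def using dnn by (intro sum_nonneg) auto
  have opt: "\<And>k x. k \<in> {1..I} \<Longrightarrow> x \<in> {0..D} \<Longrightarrow>
      ln (S + eps k) - xi k * d k * ell k \<ge> ln (S - d k + x + eps k) - xi k * x * ell k"
  proof -
    fix k x assume k: "k \<in> {1..I}" and x: "x \<in> {0..D}"
    have "payoff I eps xi ell k d \<ge> payoff I eps xi ell k (d(k := x))"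
      using assms(3,5) k x unfolding nash_eq_def by metis
    thus "ln (S + eps k) - xi k * d k * ell k \<ge> ln (S - d k + x + eps k) - xi k * x * ell k"
      unfolding payoff_def S_def using upd_sum[OF k, of d x] by simp
  qed
  define mi where "mi = remaining_metric eps xi ell i"
  define mj where "mj = remaining_metric eps xi ell j"
  have mij: "mi < mj" using assms(4)[OF iI] by (simp add: mi_def mj_def j_def)
  have pi: "eps i > 0" "xi i > 0" "ell i > 0" using assms(2)[OF i1] by auto
  have pj: "eps j > 0" "xi j > 0" "ell j > 0" using assms(2)[OF j1] by auto
  have dj: "d j < d i" using neg by (simp add: j_def)
  have di: "d i \<le> D" "d j \<ge> 0" using dnn[OF i1] dnn[OF j1] by auto
  define t where "t = min (d i - d j) ((mj - mi) / 4)"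
  have t0: "t > 0" using dj mij by (simp add: t_def)
  have ti: "t \<le> d i" using di by (simp add: t_def)
  have tj: "d j + t \<le> D" using di by (simp add: t_def)
  have tm: "4 * t \<le> mj - mi" unfolding t_def by (simp add: min_def)
  have ci: "xi i * ell i > 0" using pi by simp
  have "ln (S + eps i) - xi i * d i * ell i \<ge> ln (S - d i + (d i - t) + eps i) - xi i * (d i - t) * ell i"
    using opt[OF i1, of "d i - t"] ti t0 di by auto
  hence "ln ((S - t + eps i) + t) - ln (S - t + eps i) \<ge> (xi i * ell i) * t"
    by (simp add: algebra_simps)
  moreover have "S - t + eps i > 0"
  proof -
    have "S \<ge> d i" unfolding S_def using i1 dnn
      by (intro member_le_sum) auto
    thus ?thesis using ti pi by linarith
  qed
  ultimately have A: "S - t + eps i \<le> 1 / (xi i * ell i)" using foc_down t0 ci by blast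
  have "mi = 1 / (xi i * ell i) - eps i" by (simp add: mi_def remaining_metric_def divide_inverse)
  with A have A': "S - t \<le> mi" by linarith
  have cj: "xi j * ell j > 0" using pj by simp
  have "ln (S + eps j) - xi j * d j * ell j \<ge> ln (S - d j + (d j + t) + eps j) - xi j * (d j + t) * ell j"
    using opt[OF j1, of "d j + t"] tj t0 di by auto
  hence "ln ((S + eps j) + t) - ln (S + eps j) \<le> (xi j * ell j) * t"
    by (simp add: algebra_simps)
  moreover have "S + eps j > 0" using S0 pj by linarith
  ultimately have B: "S + eps j + t \<ge> 1 / (xi j * ell j)" using foc_up t0 cj by blast
  have "mj = 1 / (xi j * ell j) - eps j" by (simp add: mj_def remaining_metric_def divide_inverse)
  with B have "S + t \<ge> mj" by linarith
  with A' tm t0 show False by linarith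
qed

end
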